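(* Let $f\in\mathbb{Q}[x]$ be a univariate numerical polynomial of degree $n$, written uniquely as $f(x)=\sum_{i=0}^n a_i\binom{x}{i}$ with $a_i\in\mathbb{Z}$, and set $a_i=0$ for $i<0$ and $i>n$. An integer $m$ divides $\gcd\{kf(k)\mid k\in\mathbb{Z}\}$ if and only if \[ k(a_k+a_{k-1})\equiv 0\pmod m\ \text{ for all } 1\le k\le n,\qquad a_1+a_0\equiv0\pmod m,\qquad (n+1)a_n\equiv0\pmod m. \]
   Context: A numerical polynomial is a polynomial with rational coefficients taking integer values at all integers; $\binom{x}{i}=x(x-1)\cdots(x-i+1)/i!$. *)

theory Defs
  imports "HOL-Computational_Algebra.Polynomial"
begin

end

theory Submission
  imports Defs
begin

lemma gchoose_int: "\<exists>c::int. (of_int k :: rat) gchoose j = of_int c"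
proof (cases "k \<ge> 0")
  case True
  then have e: "(of_int k :: rat) = of_nat (nat k)" by simp
  have "(of_int k :: rat) gchoose j = of_nat (nat k) gchoose j" by (simp only: e)
  also have "\<dots> = of_nat (nat k choose j)" by (rule binomial_gbinomial[symmetric])
  also have "\<dots> = of_int (int (nat k choose j))" by (rule of_int_of_nat_eq[symmetric])
  finally show ?thesis by blast
next
  case False
  have e: "(of_nat j - of_int k - 1 :: rat) = of_nat (j + nat (-k) - 1)"
    using False by (simp add: of_nat_diff)
  have "(of_int k :: rat) gchoose j = (-1)^j * ((of_nat j - of_int k - 1) gchoose j)"
    by (rule gbinomial_negated_upper)
  also have "\<dots> = (-1)^j * (of_nat (j + nat (-k) - 1) gchoose j)" by (simp only: e)
  also have "\<dots> = (-1)^j * of_nat ((j + nat (-k) - 1) choose j)"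
    by (simp only: binomial_gbinomial)
  also have "\<dots> = of_int ((-1)^j * int ((j + nat (-k) - 1) choose j))" by simp
  finally show ?thesis by blast
qed

lemma shift_formula:
  fixes a :: "nat \<Rightarrow> int" and x :: rat
  assumes "a (Suc n) = 0"
  shows "x * (\<Sum>i=0..n. of_int (a i) * (x gchoose i))
    = (\<Sum>j=0..Suc n. of_int (int j * (a j + a (j - 1))) * (x gchoose j))"
proof -
  have "x * (\<Sum>i=0..n. of_int (a i) * (x gchoose i))
     = (\<Sum>i=0..n. of_int (a i) * (of_nat i * (x gchoose i)))
       + (\<Sum>i=0..n. of_int (a i) * (of_nat (Suc i) * (x gchoose Suc i)))"
  proof -
    have "x * (\<Sum>i=0..n. of_int (a i) * (x gchoose i))
       = (\<Sum>i=0..n. of_int (a i) * (x * (x gchoose i)))"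
      by (simp add: sum_distrib_left ac_simps)
    also have "\<dots> = (\<Sum>i=0..n. of_int (a i) * (of_nat i * (x gchoose i))
                        + of_int (a i) * (of_nat (Suc i) * (x gchoose Suc i)))"
      by (simp only: gbinomial_mult_1 distrib_left)
    finally show ?thesis by (simp only: sum.distrib)
  qed
  also have "(\<Sum>i=0..n. of_int (a i) * (of_nat i * (x gchoose i)))
      = (\<Sum>j=0..Suc n. of_int (int j * a j) * (x gchoose j))"
    using assms by (simp add: mult_ac)
  also have "(\<Sum>i=0..n. of_int (a i) * (of_nat (Suc i) * (x gchoose Suc i)))
      = (\<Sum>j=0..Suc n. of_int (int j * a (j - 1)) * (x gchoose j))"
    by (subst sum.atLeast0_atMost_Suc_shift) (simp add: mult_ac)
  finally show ?thesis
    by (simp only: sum.distrib[symmetric] of_int_add of_int_mult distrib_left distrib_right)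
qed

theorem corollary3p7:
  fixes f :: "rat poly" and n :: nat and a :: "nat \<Rightarrow> int" and m :: int
  assumes numerical: "\<forall>k::int. poly f (of_int k) \<in> \<int>"
    and deg: "degree f = n"
    and repr: "\<forall>x::rat. poly f x = (\<Sum>i=0..n. of_int (a i) * (x gchoose i))"
    and zero_above: "\<forall>i>n. a i = 0"
  shows "m dvd Gcd {z::int. \<exists>k::int. rat_of_int z = rat_of_int k * poly f (of_int k)}
     \<longleftrightarrow> (\<forall>k\<in>{1..n}. m dvd int k * (a k + a (k - 1)))
         \<and> m dvd (a 1 + a 0)
         \<and> m dvd (int n + 1) * a n"
proof -
  define b where "b j = int j * (a j + a (j - 1))" for j
  define S where "S = {z::int. \<exists>k::int. rat_of_int z = rat_of_int k * poly f (of_int k)}"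
  have key: "x * poly f x = (\<Sum>j=0..Suc n. of_int (b j) * (x gchoose j))" for x :: rat
    unfolding b_def repr[rule_format] using zero_above by (intro shift_formula) simp
  have b0: "b 0 = 0" by (simp add: b_def)
  have bn: "b (Suc n) = (int n + 1) * a n" using zero_above by (simp add: b_def)
  have b1: "b 1 = a 1 + a 0" by (simp add: b_def)
  have "m dvd Gcd S \<longleftrightarrow> (\<forall>z\<in>S. m dvd z)" by (simp add: dvd_Gcd_iff)
  also have "\<dots> \<longleftrightarrow> (\<forall>j\<in>{0..Suc n}. m dvd b j)"
  proof
    assume H: "\<forall>z\<in>S. m dvd z"
    have "j \<le> Suc n \<longrightarrow> m dvd b j" for j
    proof (induction j rule: less_induct)
      case (less j)
      show ?case
      proof
        assume jle: "j \<le> Suc n"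
        obtain v where v: "poly f (of_int (int j)) = of_int v"
          using numerical by (meson Ints_cases)
        have "int j * v \<in> S" unfolding S_def
        proof (intro CollectI exI[of _ "int j"])
          show "rat_of_int (int j * v) = rat_of_int (int j) * poly f (rat_of_int (int j))"
            using v by simp
        qed
        with H have d: "m dvd int j * v" by blast
        have "rat_of_int (int j * v) = of_nat j * poly f (of_nat j)" using v by simp
        also have "\<dots> = (\<Sum>i=0..Suc n. of_int (b i) * (of_nat j gchoose i))" by (rule key)
        also have "\<dots> = of_int (\<Sum>i=0..Suc n. b i * int (j choose i))"
          by (simp add: binomial_gbinomial[symmetric])
        finally have eq: "int j * v = (\<Sum>i=0..Suc n. b i * int (j choose i))"
          by (simp only: of_int_eq_iff)
        have "(\<Sum>i=0..Suc n. b i * int (j choose i))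
            = b j * int (j choose j) + (\<Sum>i\<in>{0..Suc n} - {j}. b i * int (j choose i))"
          using jle by (subst sum.remove[of _ j]) auto
        moreover have "m dvd (\<Sum>i\<in>{0..Suc n} - {j}. b i * int (j choose i))"
        proof (rule dvd_sum)
          fix i assume i: "i \<in> {0..Suc n} - {j}"
          show "m dvd b i * int (j choose i)"
          proof (cases "i < j")
            case True
            then have "m dvd b i" using less.IH[of i] jle by simp
            then show ?thesis by (rule dvd_mult2)
          next
            case False then have "j < i" using i by auto
            then have "j choose i = 0" by (rule binomial_eq_0)
            then have "b i * int (j choose i) = 0" by simp
            then show ?thesis by (simp only: dvd_0_right)
          qed
        qed
        ultimately have "m dvd b j * int (j choose j) + (\<Sum>i\<in>{0..Suc n} - {j}. b i * int (j choose i))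
             \<and> m dvd (\<Sum>i\<in>{0..Suc n} - {j}. b i * int (j choose i))"
          using d eq by simp
        then have "m dvd b j * int (j choose j)" using dvd_add_left_iff by blast
        then show "m dvd b j" by simp
      qed
    qed
    then show "\<forall>j\<in>{0..Suc n}. m dvd b j" by auto
  next
    assume H: "\<forall>j\<in>{0..Suc n}. m dvd b j"
    show "\<forall>z\<in>S. m dvd z"
    proof
      fix z assume "z \<in> S"
      then obtain k where k: "rat_of_int z = rat_of_int k * poly f (of_int k)"
        unfolding S_def by blast
      have "\<forall>j. \<exists>c. (of_int k :: rat) gchoose j = of_int c" using gchoose_int by blast
      then obtain c where c: "\<And>j. (of_int k :: rat) gchoose j = of_int (c j)" by metis
      have "rat_of_int z = of_int (\<Sum>j=0..Suc n. b j * c j)"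
        using k key[of "of_int k"] c by simp
      then have "z = (\<Sum>j=0..Suc n. b j * c j)" by (simp only: of_int_eq_iff)
      moreover have "m dvd (\<Sum>j=0..Suc n. b j * c j)"
        using H by (intro dvd_sum) simp
      ultimately show "m dvd z" by simp
    qed
  qed
  also have "\<dots> \<longleftrightarrow> (\<forall>k\<in>{1..n}. m dvd int k * (a k + a (k - 1)))
         \<and> m dvd (a 1 + a 0) \<and> m dvd (int n + 1) * a n"
  proof
    assume H: "\<forall>j\<in>{0..Suc n}. m dvd b j"
    show "(\<forall>k\<in>{1..n}. m dvd int k * (a k + a (k - 1)))
         \<and> m dvd (a 1 + a 0) \<and> m dvd (int n + 1) * a n"
    proof (intro conjI ballI)
      fix k assume "k \<in> {1..n}"
      then have "k \<in> {0..Suc n}" by simp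
      then show "m dvd int k * (a k + a (k - 1))" using H unfolding b_def by blast
    next
      have "(1::nat) \<in> {0..Suc n}" by simp
      then show "m dvd a 1 + a 0" using H b1 by metis
    next
      have "Suc n \<in> {0..Suc n}" by simp
      then show "m dvd (int n + 1) * a n" using H bn by metis
    qed
  next
    assume H: "(\<forall>k\<in>{1..n}. m dvd int k * (a k + a (k - 1)))
         \<and> m dvd (a 1 + a 0) \<and> m dvd (int n + 1) * a n"
    show "\<forall>j\<in>{0..Suc n}. m dvd b j"
    proof
      fix j assume j: "j \<in> {0..Suc n}"
      show "m dvd b j"
      proof (cases "j = 0")
        case True then show ?thesis using b0 by simp
      next
        case False
        show ?thesis
        proof (cases "j = Suc n")
          case True then show ?thesis using bn H by simp
        next
          case False
          with \<open>j \<noteq> 0\<close> j have "j \<in> {1..n}" by auto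
          then show ?thesis using H unfolding b_def by blast
        qed
      qed
    qed
  qed
  finally show ?thesis unfolding S_def .
qed

end
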